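(* Let $(M,\mathcal F,D,g)$ be a foliated Hessian structure of codimension $q$. The normal Hessian sectional curvature of $(M,\mathcal F,D,g)$ is constant and equal to $c$ if and only if for any adapted foliated affine coordinate system $(x^1,\dots,x^p,y^1,\dots,y^q)$, $$Q_{ijkl}=\frac c2\{g_{ij}g_{kl}+g_{il}g_{jk}\}\quad\text{for all } i,j,k,l=1,\dots,q.$$
   Context: $N(M,\mathcal F)=TM/T\mathcal F$. Foliated Hessian structure $(D,g)$: $D$ a flat torsion-free foliated connection in the normal bundle (adapted foliated affine coordinates: adapted charts with affine transverse coordinate changes and $\overline{\partial/\partial y^i}$ $D$-parallel), $g$ a foliated metric in the normal bundle with locally $g_{ij}=\partial^2h/\partial y^i\partial y^j$, $h$ a function of $y$ only. $\nabla$ normal Levi-Civita connection of $g$, $\gamma=\nabla-D$, normal Hessian curvature $Q=D\gamma$ with $Q^i_{jkl}=\partial\gamma^i_{jl}/\partial y^k$, indices lowered/raised by $g$. $\hat Q$ is the endomorphism of the bundle of symmetric contravariant normal 2-tensors given by $\hat Q(\xi)^{ik}=Q^i{}_j{}^k{}_l\xi^{jl}$. The normal Hessian sectional curvature is $q(\xi)=\langle\hat Q(\xi),\xi\rangle/\langle\xi,\xi\rangle$ for nonzero such $\xi$, $\langle\,,\rangle$ the inner product induced by $g$; it is constant equal to $c$ if $q\equiv c$. *)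

theory Defs
  imports "HOL-Analysis.Analysis"
begin

text \<open>Local (chart-level) model of a foliated Hessian structure of codimension q.
  The transverse affine coordinates y = (y^1,...,y^q) of an adapted foliated affine
  chart range over an open set U of real^'q (CARD('q) = q); the metric is
  g_ij = d^2 h / dy^i dy^j with h a smooth function of y only. In such coordinates
  the flat connection D has vanishing Christoffel symbols, so gamma = nabla - D has
  the Christoffel symbols of the Levi-Civita connection of g as components.\<close>

definition pd :: "'q::finite \<Rightarrow> (real^'q \<Rightarrow> real) \<Rightarrow> real^'q \<Rightarrow> real" where
  "pd i f y = deriv (\<lambda>t. f (y + t *\<^sub>R axis i 1)) 0"

fun pdl :: "'q::finite list \<Rightarrow> (real^'q \<Rightarrow> real) \<Rightarrow> real^'q \<Rightarrow> real" where
  "pdl [] f = f"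
| "pdl (i # is) f = pd i (pdl is f)"

definition smooth_on :: "(real^'q::finite) set \<Rightarrow> (real^'q \<Rightarrow> real) \<Rightarrow> bool" where
  "smooth_on U f \<longleftrightarrow> (\<forall>is. continuous_on U (pdl is f) \<and>
     (\<forall>i. \<forall>y\<in>U. (\<lambda>t. pdl is f (y + t *\<^sub>R axis i 1)) differentiable (at 0)))"

definition hess_metric :: "(real^'q::finite \<Rightarrow> real) \<Rightarrow> real^'q \<Rightarrow> 'q \<Rightarrow> 'q \<Rightarrow> real" where
  "hess_metric h y i j = pd i (pd j h) y"

definition metric_inv :: "(real^'q::finite \<Rightarrow> real) \<Rightarrow> real^'q \<Rightarrow> 'q \<Rightarrow> 'q \<Rightarrow> real" where
  "metric_inv h y i j = matrix_inv (\<chi> a b. hess_metric h y a b) $ i $ j"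

definition christoffel :: "(real^'q::finite \<Rightarrow> real) \<Rightarrow> real^'q \<Rightarrow> 'q \<Rightarrow> 'q \<Rightarrow> 'q \<Rightarrow> real" where
  "christoffel h y i j k = (1/2) * (\<Sum>l\<in>UNIV. metric_inv h y i l *
     (pd j (\<lambda>z. hess_metric h z l k) y + pd k (\<lambda>z. hess_metric h z l j) y
      - pd l (\<lambda>z. hess_metric h z j k) y))"

text \<open>Difference tensor gamma = nabla - D; D has zero Christoffel symbols in affine coordinates.\<close>
definition hess_gamma :: "(real^'q::finite \<Rightarrow> real) \<Rightarrow> real^'q \<Rightarrow> 'q \<Rightarrow> 'q \<Rightarrow> 'q \<Rightarrow> real" where
  "hess_gamma h y i j k = christoffel h y i j k - 0"

definition hessQ :: "(real^'q::finite \<Rightarrow> real) \<Rightarrow> real^'q \<Rightarrow> 'q \<Rightarrow> 'q \<Rightarrow> 'q \<Rightarrow> 'q \<Rightarrow> real" where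
  "hessQ h y i j k l = pd k (\<lambda>z. hess_gamma h z i j l) y"

definition hessQ_low :: "(real^'q::finite \<Rightarrow> real) \<Rightarrow> real^'q \<Rightarrow> 'q \<Rightarrow> 'q \<Rightarrow> 'q \<Rightarrow> 'q \<Rightarrow> real" where
  "hessQ_low h y i j k l = (\<Sum>m\<in>UNIV. hess_metric h y i m * hessQ h y m j k l)"

definition hessQ_mixed :: "(real^'q::finite \<Rightarrow> real) \<Rightarrow> real^'q \<Rightarrow> 'q \<Rightarrow> 'q \<Rightarrow> 'q \<Rightarrow> 'q \<Rightarrow> real" where
  "hessQ_mixed h y i j k l = (\<Sum>m\<in>UNIV. metric_inv h y k m * hessQ h y i j m l)"

definition sym2 :: "('q \<Rightarrow> 'q \<Rightarrow> real) \<Rightarrow> bool" where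
  "sym2 \<xi> \<longleftrightarrow> (\<forall>i k. \<xi> i k = \<xi> k i)"

definition hatQ :: "(real^'q::finite \<Rightarrow> real) \<Rightarrow> real^'q \<Rightarrow> ('q \<Rightarrow> 'q \<Rightarrow> real) \<Rightarrow> 'q \<Rightarrow> 'q \<Rightarrow> real" where
  "hatQ h y \<xi> i k = (\<Sum>j\<in>UNIV. \<Sum>l\<in>UNIV. hessQ_mixed h y i j k l * \<xi> j l)"

definition tens_inner :: "(real^'q::finite \<Rightarrow> real) \<Rightarrow> real^'q \<Rightarrow> ('q \<Rightarrow> 'q \<Rightarrow> real) \<Rightarrow> ('q \<Rightarrow> 'q \<Rightarrow> real) \<Rightarrow> real" where
  "tens_inner h y \<xi> \<eta> = (\<Sum>i\<in>UNIV. \<Sum>j\<in>UNIV. \<Sum>k\<in>UNIV. \<Sum>l\<in>UNIV.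
      hess_metric h y i j * hess_metric h y k l * \<xi> i k * \<eta> j l)"

definition hess_sectional :: "(real^'q::finite \<Rightarrow> real) \<Rightarrow> real^'q \<Rightarrow> ('q \<Rightarrow> 'q \<Rightarrow> real) \<Rightarrow> real" where
  "hess_sectional h y \<xi> = tens_inner h y (hatQ h y \<xi>) \<xi> / tens_inner h y \<xi> \<xi>"

definition hessian_potential :: "(real^'q::finite) set \<Rightarrow> (real^'q \<Rightarrow> real) \<Rightarrow> bool" where
  "hessian_potential U h \<longleftrightarrow> smooth_on U h \<and>
     (\<forall>y\<in>U. \<forall>v::real^'q. v \<noteq> 0 \<longrightarrow>
        (\<Sum>i\<in>UNIV. \<Sum>j\<in>UNIV. hess_metric h y i j * v $ i * v $ j) > 0)"

end

theory Submission
  imports Defs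
begin

definition ldiff :: "(real^'q::finite \<Rightarrow> real) \<Rightarrow> real^'q \<Rightarrow> 'q \<Rightarrow> bool" where
  "ldiff F y k \<longleftrightarrow> (\<lambda>t. F (y + t *\<^sub>R axis k 1)) differentiable (at 0)"

lemma pd_has:
  assumes "ldiff F y k"
  shows "((\<lambda>t. F (y + t *\<^sub>R axis k 1)) has_real_derivative pd k F y) (at 0)"
  using assms unfolding ldiff_def pd_def
  by (simp add: DERIV_deriv_iff_real_differentiable)

lemma ldiff_I:
  assumes "((\<lambda>t. F (y + t *\<^sub>R axis k 1)) has_real_derivative D) (at 0)"
  shows "ldiff F y k" and "pd k F y = D"
  using assms unfolding ldiff_def pd_def
  by (auto simp: real_differentiable_def intro: DERIV_imp_deriv)

lemma pd_mult:
  assumes "ldiff F y k" "ldiff G y k"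
  shows "pd k (\<lambda>z. F z * G z) y = pd k F y * G y + F y * pd k G y"
    and "ldiff (\<lambda>z. F z * G z) y k"
proof -
  have "((\<lambda>t. F (y + t *\<^sub>R axis k 1) * G (y + t *\<^sub>R axis k 1)) has_real_derivative
     pd k F y * G y + F y * pd k G y) (at 0)"
    using DERIV_mult[OF pd_has[OF assms(1)] pd_has[OF assms(2)]] by (simp add: algebra_simps)
  from ldiff_I[OF this] show "pd k (\<lambda>z. F z * G z) y = pd k F y * G y + F y * pd k G y"
    and "ldiff (\<lambda>z. F z * G z) y k" by auto
qed

lemma pd_sum:
  assumes "finite S" "\<And>a. a \<in> S \<Longrightarrow> ldiff (F a) y k"
  shows "pd k (\<lambda>z. \<Sum>a\<in>S. F a z) y = (\<Sum>a\<in>S. pd k (F a) y)"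
    and "ldiff (\<lambda>z. \<Sum>a\<in>S. F a z) y k"
proof -
  have "((\<lambda>t. \<Sum>a\<in>S. F a (y + t *\<^sub>R axis k 1)) has_real_derivative (\<Sum>a\<in>S. pd k (F a) y)) (at 0)"
    by (rule DERIV_sum) (rule pd_has[OF assms(2)])
  from ldiff_I[OF this] show "pd k (\<lambda>z. \<Sum>a\<in>S. F a z) y = (\<Sum>a\<in>S. pd k (F a) y)"
    and "ldiff (\<lambda>z. \<Sum>a\<in>S. F a z) y k" by auto
qed

lemma pd_cmult:
  assumes "ldiff F y k"
  shows "pd k (\<lambda>z. c * F z) y = c * pd k F y" and "ldiff (\<lambda>z. c * F z) y k"
proof -
  have "((\<lambda>t. c * F (y + t *\<^sub>R axis k 1)) has_real_derivative c * pd k F y) (at 0)"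
    by (rule DERIV_cmult) (rule pd_has[OF assms])
  from ldiff_I[OF this] show "pd k (\<lambda>z. c * F z) y = c * pd k F y" "ldiff (\<lambda>z. c * F z) y k" by auto
qed

lemma ev_line:
  fixes y :: "real^'q::finite"
  assumes "open U" "y \<in> U"
  shows "eventually (\<lambda>t. y + t *\<^sub>R axis k 1 \<in> U) (nhds (0::real))"
proof -
  have "open ((\<lambda>t::real. y + t *\<^sub>R axis k 1) -` U)"
    by (rule open_vimage[OF assms(1)]) (intro continuous_on_add continuous_on_const continuous_on_scaleR continuous_on_id)
  moreover have "0 \<in> (\<lambda>t::real. y + t *\<^sub>R axis k 1) -` U" using assms by simp
  ultimately show ?thesis using eventually_nhds_in_open by fastforce
qed

lemma pd_local:
  assumes "open U" "y \<in> U" "\<And>z. z \<in> U \<Longrightarrow> F z = G z"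
  shows "pd k F y = pd k G y" and "ldiff F y k \<longleftrightarrow> ldiff G y k"
proof -
  have ev: "eventually (\<lambda>t. F (y + t *\<^sub>R axis k 1) = G (y + t *\<^sub>R axis k 1)) (nhds (0::real))"
    using ev_line[OF assms(1,2), of k] by eventually_elim (use assms(3) in auto)
  show "pd k F y = pd k G y" unfolding pd_def by (rule deriv_cong_ev[OF ev refl])
  show "ldiff F y k \<longleftrightarrow> ldiff G y k"
    unfolding ldiff_def DERIV_deriv_iff_real_differentiable[symmetric]
    using DERIV_cong_ev[OF refl ev, of "deriv (\<lambda>t. F (y + t *\<^sub>R axis k 1)) 0" "deriv (\<lambda>t. G (y + t *\<^sub>R axis k 1)) 0"]
      deriv_cong_ev[OF ev refl] by auto
qed

lemma line_deriv:
  assumes "ldiff F (w + s *\<^sub>R axis k 1) k"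
  shows "((\<lambda>\<sigma>. F (w + \<sigma> *\<^sub>R axis k 1)) has_real_derivative pd k F (w + s *\<^sub>R axis k 1)) (at s)"
proof -
  have "((\<lambda>t. F ((w + s *\<^sub>R axis k 1) + t *\<^sub>R axis k 1)) has_real_derivative pd k F (w + s *\<^sub>R axis k 1)) (at 0)"
    using pd_has[OF assms] .
  moreover have "(\<lambda>t. F ((w + s *\<^sub>R axis k 1) + t *\<^sub>R axis k 1)) = (\<lambda>t. F (w + (t + s) *\<^sub>R axis k 1))"
    by (simp add: algebra_simps scaleR_add_left)
  ultimately show ?thesis using DERIV_shift[of "\<lambda>\<sigma>. F (w + \<sigma> *\<^sub>R axis k 1)" _ 0 s] by simp
qed

lemma norm2_le:
  fixes y :: "real^'q::finite"
  shows "norm (a *\<^sub>R axis i 1 + b *\<^sub>R axis j (1::real)) \<le> \<bar>a\<bar> + \<bar>b\<bar>"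
  using norm_triangle_ineq[of "a *\<^sub>R axis i (1::real)" "b *\<^sub>R axis j (1::real)"] by simp

lemma mixed_mvt:
  fixes f :: "real^'q::finite \<Rightarrow> real"
  assumes ball: "ball y r \<subseteq> U" and s: "0 < s" "2 * s < r"
    and d1: "\<And>z i. z \<in> U \<Longrightarrow> ldiff f z i"
    and d2: "\<And>z i j. z \<in> U \<Longrightarrow> ldiff (pd i f) z j"
  shows "\<exists>\<sigma> \<tau>. 0 < \<sigma> \<and> \<sigma> < s \<and> 0 < \<tau> \<and> \<tau> < s \<and>
    f ((y + s *\<^sub>R axis j 1) + s *\<^sub>R axis i 1) - f (y + s *\<^sub>R axis i 1) - f (y + s *\<^sub>R axis j 1) + f y
      = s * (s * pd j (pd i f) ((y + \<sigma> *\<^sub>R axis i 1) + \<tau> *\<^sub>R axis j 1))"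
proof -
  have mem: "(y + a *\<^sub>R axis k 1) + b *\<^sub>R axis l 1 \<in> U" if "\<bar>a\<bar> \<le> s" "\<bar>b\<bar> \<le> s" for a b k l
  proof -
    have "norm (a *\<^sub>R axis k (1::real) + b *\<^sub>R axis l (1::real)) \<le> \<bar>a\<bar> + \<bar>b\<bar>" by (rule norm2_le)
    then have "dist ((y + a *\<^sub>R axis k 1) + b *\<^sub>R axis l 1) y < r"
      using that s by (simp add: dist_norm algebra_simps)
    then show ?thesis using ball by (auto simp: dist_commute)
  qed
  have mem1: "y + a *\<^sub>R axis k 1 \<in> U" if "\<bar>a\<bar> \<le> s" for a k
    using mem[of a 0 k k] that s by simp
  define \<phi> where "\<phi> \<sigma> = f ((y + s *\<^sub>R axis j 1) + \<sigma> *\<^sub>R axis i 1) - f (y + \<sigma> *\<^sub>R axis i 1)" for \<sigma>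
  have "\<exists>z. 0 < z \<and> z < s \<and> \<phi> s - \<phi> 0 = (s - 0) *
      (pd i f ((y + s *\<^sub>R axis j 1) + z *\<^sub>R axis i 1) - pd i f (y + z *\<^sub>R axis i 1))"
    unfolding \<phi>_def
  proof (rule MVT2[OF s(1)])
    fix x assume x: "0 \<le> x" "x \<le> s"
    show "((\<lambda>\<sigma>. f ((y + s *\<^sub>R axis j 1) + \<sigma> *\<^sub>R axis i 1) - f (y + \<sigma> *\<^sub>R axis i 1)) has_real_derivative
      pd i f ((y + s *\<^sub>R axis j 1) + x *\<^sub>R axis i 1) - pd i f (y + x *\<^sub>R axis i 1)) (at x)"
      by (intro DERIV_diff line_deriv d1 mem mem1) (use x s in auto)
  qed
  then obtain \<sigma> where \<sigma>: "0 < \<sigma>" "\<sigma> < s" and e1: "\<phi> s - \<phi> 0 = s *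
      (pd i f ((y + s *\<^sub>R axis j 1) + \<sigma> *\<^sub>R axis i 1) - pd i f (y + \<sigma> *\<^sub>R axis i 1))" by auto
  have "\<exists>z. 0 < z \<and> z < s \<and> pd i f ((y + \<sigma> *\<^sub>R axis i 1) + s *\<^sub>R axis j 1) - pd i f ((y + \<sigma> *\<^sub>R axis i 1) + 0 *\<^sub>R axis j 1)
     = (s - 0) * pd j (pd i f) ((y + \<sigma> *\<^sub>R axis i 1) + z *\<^sub>R axis j 1)"
  proof (rule MVT2[OF s(1)])
    fix x assume x: "0 \<le> x" "x \<le> s"
    show "((\<lambda>\<tau>. pd i f ((y + \<sigma> *\<^sub>R axis i 1) + \<tau> *\<^sub>R axis j 1)) has_real_derivative
      pd j (pd i f) ((y + \<sigma> *\<^sub>R axis i 1) + x *\<^sub>R axis j 1)) (at x)"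
      by (intro line_deriv d2 mem) (use x s \<sigma> in auto)
  qed
  then obtain \<tau> where \<tau>: "0 < \<tau>" "\<tau> < s" and e2: "pd i f ((y + \<sigma> *\<^sub>R axis i 1) + s *\<^sub>R axis j 1) - pd i f ((y + \<sigma> *\<^sub>R axis i 1) + 0 *\<^sub>R axis j 1)
     = s * pd j (pd i f) ((y + \<sigma> *\<^sub>R axis i 1) + \<tau> *\<^sub>R axis j 1)" by auto
  have eq: "(y + s *\<^sub>R axis j 1) + \<sigma> *\<^sub>R axis i 1 = (y + \<sigma> *\<^sub>R axis i 1) + s *\<^sub>R axis j (1::real)"
    by (simp add: algebra_simps)
  show ?thesis
    apply (rule exI[of _ \<sigma>], rule exI[of _ \<tau>])
    using \<sigma> \<tau> e1 e2 eq unfolding \<phi>_def by (simp add: algebra_simps)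
qed

lemma clairaut:
  fixes f :: "real^'q::finite \<Rightarrow> real"
  assumes "open U" "y \<in> U"
    and d1: "\<And>z i. z \<in> U \<Longrightarrow> ldiff f z i"
    and d2: "\<And>z i j. z \<in> U \<Longrightarrow> ldiff (pd i f) z j"
    and c: "\<And>i j. continuous_on U (pd j (pd i f))"
  shows "pd j (pd i f) y = pd i (pd j f) y"
proof (rule ccontr)
  assume ne: "pd j (pd i f) y \<noteq> pd i (pd j f) y"
  define \<epsilon> where "\<epsilon> = \<bar>pd j (pd i f) y - pd i (pd j f) y\<bar> / 4"
  have \<epsilon>: "\<epsilon> > 0" using ne by (simp add: \<epsilon>_def)
  obtain r where r: "r > 0" "ball y r \<subseteq> U" using assms(1,2) open_contains_ball by blast
  have cA: "isCont (pd j (pd i f)) y" using c assms(1,2) continuous_on_eq_continuous_at by blast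
  have cB: "isCont (pd i (pd j f)) y" using c assms(1,2) continuous_on_eq_continuous_at by blast
  obtain dA where dA: "dA > 0" "\<And>x. dist x y < dA \<Longrightarrow> dist (pd j (pd i f) x) (pd j (pd i f) y) < \<epsilon>"
    using cA \<epsilon> unfolding continuous_at_eps_delta by blast
  obtain dB where dB: "dB > 0" "\<And>x. dist x y < dB \<Longrightarrow> dist (pd i (pd j f) x) (pd i (pd j f) y) < \<epsilon>"
    using cB \<epsilon> unfolding continuous_at_eps_delta by blast
  define s where "s = min r (min dA dB) / 3"
  have s: "0 < s" "2 * s < r" "2 * s < dA" "2 * s < dB" using r dA dB by (auto simp: s_def)
  obtain \<sigma> \<tau> where st: "0 < \<sigma>" "\<sigma> < s" "0 < \<tau>" "\<tau> < s" and E1: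
    "f ((y + s *\<^sub>R axis j 1) + s *\<^sub>R axis i 1) - f (y + s *\<^sub>R axis i 1) - f (y + s *\<^sub>R axis j 1) + f y
      = s * (s * pd j (pd i f) ((y + \<sigma> *\<^sub>R axis i 1) + \<tau> *\<^sub>R axis j 1))"
    using mixed_mvt[OF r(2) s(1,2) d1 d2] by blast
  obtain \<sigma>' \<tau>' where st': "0 < \<sigma>'" "\<sigma>' < s" "0 < \<tau>'" "\<tau>' < s" and E2:
    "f ((y + s *\<^sub>R axis i 1) + s *\<^sub>R axis j 1) - f (y + s *\<^sub>R axis j 1) - f (y + s *\<^sub>R axis i 1) + f y
      = s * (s * pd i (pd j f) ((y + \<sigma>' *\<^sub>R axis j 1) + \<tau>' *\<^sub>R axis i 1))"
    using mixed_mvt[OF r(2) s(1,2) d1 d2] by blast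
  have eq: "(y + s *\<^sub>R axis j 1) + s *\<^sub>R axis i 1 = (y + s *\<^sub>R axis i 1) + s *\<^sub>R axis j (1::real)"
    by (simp add: algebra_simps)
  have "s * (s * pd j (pd i f) ((y + \<sigma> *\<^sub>R axis i 1) + \<tau> *\<^sub>R axis j 1)) =
        s * (s * pd i (pd j f) ((y + \<sigma>' *\<^sub>R axis j 1) + \<tau>' *\<^sub>R axis i 1))"
    using E1 E2 unfolding eq by linarith
  then have AB: "pd j (pd i f) ((y + \<sigma> *\<^sub>R axis i 1) + \<tau> *\<^sub>R axis j 1) = pd i (pd j f) ((y + \<sigma>' *\<^sub>R axis j 1) + \<tau>' *\<^sub>R axis i 1)"
    using s(1) by simp
  have n1: "dist ((y + \<sigma> *\<^sub>R axis i 1) + \<tau> *\<^sub>R axis j 1) y < dA"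
    using norm2_le[of \<sigma> i \<tau> j] st s by (simp add: dist_norm)
  have n2: "dist ((y + \<sigma>' *\<^sub>R axis j 1) + \<tau>' *\<^sub>R axis i 1) y < dB"
    using norm2_le[of \<sigma>' j \<tau>' i] st' s by (simp add: dist_norm)
  have "\<bar>pd j (pd i f) y - pd i (pd j f) y\<bar> < 2 * \<epsilon>"
    using dA(2)[OF n1] dB(2)[OF n2] AB by (simp add: dist_real_def)
  then show False by (simp add: \<epsilon>_def)
qed

definition ind :: "'a \<Rightarrow> 'a \<Rightarrow> real" where "ind a i = (if i = a then 1 else 0)"

lemma sum_ind_r: "(\<Sum>j\<in>(UNIV::'a::finite set). f j * ind a j) = f a"
proof -
  have "(\<Sum>j\<in>(UNIV::'a set). f j * ind a j) = (\<Sum>j\<in>UNIV. if a = j then f j else 0)"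
    by (rule sum.cong) (auto simp: ind_def)
  also have "\<dots> = f a" by simp
  finally show ?thesis .
qed
lemma sum_ind_l: "(\<Sum>j\<in>(UNIV::'a::finite set). ind a j * f j) = f a"
  using sum_ind_r[of f a] by (simp add: mult.commute)

lemma qexp:
  fixes G :: "'a::finite \<Rightarrow> 'a \<Rightarrow> real"
  assumes sym: "\<And>i j. G i j = G j i"
  shows "(\<Sum>i\<in>UNIV. \<Sum>j\<in>UNIV. G i j * (x i + t * ind a i) * (x j + t * ind a j))
    = (\<Sum>i\<in>UNIV. \<Sum>j\<in>UNIV. G i j * x i * x j) + 2 * t * (\<Sum>j\<in>UNIV. G a j * x j) + t * t * G a a"
proof -
  have e: "G i j * (x i + t * ind a i) * (x j + t * ind a j) =
     G i j * x i * x j + t * ((G i j * x i) * ind a j) + t * (ind a i * (G i j * x j)) + t * t * (ind a i * (G i j * ind a j))" for i j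
    by (simp add: algebra_simps)
  have "(\<Sum>i\<in>UNIV. \<Sum>j\<in>UNIV. G i j * (x i + t * ind a i) * (x j + t * ind a j))
    = (\<Sum>i\<in>UNIV. \<Sum>j\<in>UNIV. G i j * x i * x j) + t * (\<Sum>i\<in>UNIV. \<Sum>j\<in>UNIV. (G i j * x i) * ind a j)
      + t * (\<Sum>i\<in>UNIV. ind a i * (\<Sum>j\<in>UNIV. G i j * x j)) + t * t * (\<Sum>i\<in>UNIV. ind a i * (\<Sum>j\<in>UNIV. G i j * ind a j))"
    unfolding e by (simp only: sum.distrib sum_distrib_left)
  also have "\<dots> = (\<Sum>i\<in>UNIV. \<Sum>j\<in>UNIV. G i j * x i * x j) + t * (\<Sum>i\<in>UNIV. G i a * x i)
      + t * (\<Sum>j\<in>UNIV. G a j * x j) + t * t * G a a"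
    by (simp only: sum_ind_r sum_ind_l)
  also have "(\<Sum>i\<in>UNIV. G i a * x i) = (\<Sum>j\<in>UNIV. G a j * x j)" using sym by simp
  finally show ?thesis by simp
qed

definition quad :: "('a::finite \<Rightarrow> 'a \<Rightarrow> real) \<Rightarrow> ('a \<Rightarrow> real) \<Rightarrow> real" where
  "quad G x = (\<Sum>i\<in>UNIV. \<Sum>j\<in>UNIV. G i j * x i * x j)"

lemma quad_ind_add:
  fixes G :: "'a::finite \<Rightarrow> 'a \<Rightarrow> real"
  assumes sym: "\<And>i j. G i j = G j i"
  shows "quad G (\<lambda>i. x i + t * ind a i) = quad G x + 2 * t * (\<Sum>j\<in>UNIV. G a j * x j) + t * t * G a a"
  unfolding quad_def by (rule qexp[OF sym])

lemma quad_ind: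
  fixes G :: "'a::finite \<Rightarrow> 'a \<Rightarrow> real"
  shows "quad G (ind a) = G a a"
proof -
  have "quad G (ind a) = (\<Sum>i\<in>UNIV. ind a i * (\<Sum>j\<in>UNIV. G i j * ind a j))"
    unfolding quad_def by (simp add: sum_distrib_left mult_ac)
  also have "\<dots> = G a a" by (simp only: sum_ind_r sum_ind_l)
  finally show ?thesis .
qed

lemma quad_diff_rank1:
  fixes G :: "'a::finite \<Rightarrow> 'a \<Rightarrow> real"
  shows "quad (\<lambda>i j. G i j - l i * l j) x = quad G x - (\<Sum>i\<in>UNIV. l i * x i) * (\<Sum>i\<in>UNIV. l i * x i)"
proof -
  have "quad (\<lambda>i j. G i j - l i * l j) x = quad G x - (\<Sum>i\<in>UNIV. \<Sum>j\<in>UNIV. (l i * x i) * (l j * x j))"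
  proof -
    have e: "(G i j - l i * l j) * x i * x j = G i j * x i * x j - (l i * x i) * (l j * x j)" for i j
      by (simp add: algebra_simps)
    show ?thesis unfolding quad_def e by (simp only: sum_subtractf)
  qed
  also have "(\<Sum>i\<in>UNIV. \<Sum>j\<in>UNIV. (l i * x i) * (l j * x j)) = (\<Sum>i\<in>UNIV. l i * x i) * (\<Sum>i\<in>UNIV. l i * x i)"
    by (simp add: sum_product)
  finally show ?thesis .
qed

lemma chol_aux:
  fixes S :: "'a::finite set"
  shows "\<And>G::'a\<Rightarrow>'a\<Rightarrow>real. (\<And>i j. G i j = G j i) \<Longrightarrow> (\<And>i j. i \<notin> S \<Longrightarrow> G i j = 0)
     \<Longrightarrow> (\<And>x. 0 \<le> quad G x) \<Longrightarrow> \<exists>L. \<forall>i j. G i j = (\<Sum>r\<in>S. L r i * L r j)"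
  using finite[of S]
proof (induction S rule: finite_induct)
  case empty
  then show ?case by auto
next
  case (insert a S)
  note sym = insert.prems(1) and supp = insert.prems(2) and psd = insert.prems(3)
  define d where "d = G a a"
  have d0: "d \<ge> 0" using psd[of "ind a"] by (simp add: quad_ind d_def)
  define la where "la i = (if d > 0 then G i a / sqrt d else 0)" for i
  define G' where "G' i j = G i j - la i * la j" for i j
  have sym': "G' i j = G' j i" for i j unfolding G'_def using sym[of i j] by simp
  have zero_case: "G a j = 0" if "d = 0" for j
  proof (rule ccontr)
    assume ne: "G a j \<noteq> 0"
    define t where "t = - (G j j + 1) / (2 * G a j)"
    have "0 \<le> quad G (\<lambda>i. ind j i + t * ind a i)" by (rule psd)
    also have "\<dots> = G j j + 2 * t * G a j"
      using that unfolding quad_ind_add[OF sym] quad_ind d_def by (simp add: sum_ind_r)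
    also have "\<dots> = -1" using ne by (simp add: t_def field_simps)
    finally show False by simp
  qed
  have supp': "G' i j = 0" if "i \<notin> S" for i j
  proof (cases "i = a")
    case True
    show ?thesis
    proof (cases "d > 0")
      case True
      then have "la a * la j = G j a" using \<open>i = a\<close>
        by (simp add: la_def d_def[symmetric] field_simps real_sqrt_mult[symmetric])
      then show ?thesis using \<open>i = a\<close> sym[of a j] by (simp add: G'_def)
    next
      case False
      then have "d = 0" using d0 by simp
      then show ?thesis using zero_case \<open>i = a\<close> by (simp add: G'_def la_def)
    qed
  next
    case False
    then have "i \<notin> insert a S" using that by simp
    then have "G i j = 0" "G i a = 0" using supp by auto
    then show ?thesis by (simp add: G'_def la_def)
  qed
  have psd': "0 \<le> quad G' x" for x
  proof (cases "d > 0")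
    case True
    define u where "u = (\<Sum>j\<in>UNIV. G a j * x j)"
    have lsum: "(\<Sum>i\<in>UNIV. la i * x i) = u / sqrt d"
      unfolding u_def la_def using True sym by (simp add: sum_divide_distrib[symmetric] mult.commute)
    have "quad G' x = quad G x - u * u / d"
      unfolding G'_def quad_diff_rank1 lsum using True by (simp add: field_simps)
    also have "\<dots> = quad G (\<lambda>i. x i + (- u / d) * ind a i)"
      unfolding quad_ind_add[OF sym] u_def[symmetric] d_def[symmetric] using True
      by (simp add: field_simps power2_eq_square)
    also have "\<dots> \<ge> 0" by (rule psd)
    finally show ?thesis by simp
  next
    case False
    then have "G' = G" unfolding G'_def la_def by (auto intro!: ext)
    then show ?thesis using psd by simp
  qed
  obtain L where l: "\<forall>i j. G' i j = (\<Sum>r\<in>S. L r i * L r j)"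
    using insert.IH[OF sym' supp' psd'] by blast
  show ?case
  proof (rule exI[of _ "L(a := la)"], intro allI)
    fix i j
    have "(\<Sum>r\<in>insert a S. (L(a := la)) r i * (L(a := la)) r j) = la i * la j + (\<Sum>r\<in>S. L r i * L r j)"
      using insert.hyps by (simp add: sum.insert) (rule sum.cong, auto)
    also have "\<dots> = G i j" using l[rule_format, of i j] by (simp add: G'_def)
    finally show "G i j = (\<Sum>r\<in>insert a S. (L(a := la)) r i * (L(a := la)) r j)" by simp
  qed
qed

lemma swap3: "(\<Sum>i\<in>A. \<Sum>j\<in>B. \<Sum>r\<in>C. f i j r) = (\<Sum>r\<in>C. \<Sum>i\<in>A. \<Sum>j\<in>B. f i j r)"
proof -
  have "(\<Sum>i\<in>A. \<Sum>j\<in>B. \<Sum>r\<in>C. f i j r) = (\<Sum>i\<in>A. \<Sum>r\<in>C. \<Sum>j\<in>B. f i j r)"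
    by (rule sum.cong[OF refl], rule sum.swap)
  also have "\<dots> = (\<Sum>r\<in>C. \<Sum>i\<in>A. \<Sum>j\<in>B. f i j r)" by (rule sum.swap)
  finally show ?thesis .
qed

lemma bil:
  fixes G :: "'a::finite \<Rightarrow> 'a \<Rightarrow> real"
  assumes l: "\<And>i j. G i j = (\<Sum>r\<in>UNIV. L r i * L r j)"
  shows "(\<Sum>k\<in>UNIV. \<Sum>m\<in>UNIV. G k m * a k * b m) = (\<Sum>s\<in>UNIV. (\<Sum>k\<in>UNIV. L s k * a k) * (\<Sum>m\<in>UNIV. L s m * b m))"
proof -
  have "(\<Sum>k\<in>UNIV. \<Sum>m\<in>UNIV. G k m * a k * b m) = (\<Sum>k\<in>UNIV. \<Sum>m\<in>UNIV. \<Sum>s\<in>UNIV. (L s k * a k) * (L s m * b m))"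
    unfolding l by (simp add: sum_distrib_left sum_distrib_right mult_ac)
  also have "\<dots> = (\<Sum>s\<in>UNIV. \<Sum>k\<in>UNIV. \<Sum>m\<in>UNIV. (L s k * a k) * (L s m * b m))" by (rule swap3)
  also have "\<dots> = (\<Sum>s\<in>UNIV. (\<Sum>k\<in>UNIV. L s k * a k) * (\<Sum>m\<in>UNIV. L s m * b m))"
    by (simp add: sum_product)
  finally show ?thesis .
qed

lemma tens_pos:
  fixes G :: "'a::finite \<Rightarrow> 'a \<Rightarrow> real" and \<xi> :: "'a \<Rightarrow> 'a \<Rightarrow> real"
  assumes sym: "\<And>i j. G i j = G j i"
    and pd: "\<And>x. x \<noteq> (\<lambda>_. 0) \<Longrightarrow> quad G x > 0"
    and nz: "\<xi> \<noteq> (\<lambda>_ _. 0)"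
  shows "(\<Sum>i\<in>UNIV. \<Sum>j\<in>UNIV. \<Sum>k\<in>UNIV. \<Sum>l\<in>UNIV. G i j * G k l * \<xi> i k * \<xi> j l) > 0"
proof -
  have psd: "0 \<le> quad G x" for x
    using pd[of x] by (cases "x = (\<lambda>_. 0)") (auto simp: quad_def)
  have "\<exists>L::'a\<Rightarrow>'a\<Rightarrow>real. \<forall>i j. G i j = (\<Sum>r\<in>UNIV. L r i * L r j)"
    by (rule chol_aux[where S="UNIV::'a set" and G=G]) (use sym psd in auto)
  then obtain L :: "'a\<Rightarrow>'a\<Rightarrow>real" where L: "\<forall>i j. G i j = (\<Sum>r\<in>UNIV. L r i * L r j)"
    by blast
  have L': "\<And>i j. G i j = (\<Sum>r\<in>UNIV. L r i * L r j)" using L by blast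
  define w where "w s i = (\<Sum>k\<in>UNIV. L s k * \<xi> i k)" for s i
  have "(\<Sum>i\<in>UNIV. \<Sum>j\<in>UNIV. \<Sum>k\<in>UNIV. \<Sum>l\<in>UNIV. G i j * G k l * \<xi> i k * \<xi> j l)
     = (\<Sum>i\<in>UNIV. \<Sum>j\<in>UNIV. G i j * (\<Sum>k\<in>UNIV. \<Sum>l\<in>UNIV. G k l * \<xi> i k * \<xi> j l))"
    by (simp add: sum_distrib_left mult_ac)
  also have "\<dots> = (\<Sum>i\<in>UNIV. \<Sum>j\<in>UNIV. G i j * (\<Sum>s\<in>UNIV. w s i * w s j))"
    unfolding bil[OF L'] w_def by simp
  also have "\<dots> = (\<Sum>i\<in>UNIV. \<Sum>j\<in>UNIV. \<Sum>s\<in>UNIV. G i j * w s i * w s j)"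
    by (simp add: sum_distrib_left mult_ac)
  also have "\<dots> = (\<Sum>s\<in>UNIV. quad G (w s))" unfolding quad_def by (rule swap3)
  finally have T: "(\<Sum>i\<in>UNIV. \<Sum>j\<in>UNIV. \<Sum>k\<in>UNIV. \<Sum>l\<in>UNIV. G i j * G k l * \<xi> i k * \<xi> j l)
     = (\<Sum>s\<in>UNIV. quad G (w s))" .
  have "(\<Sum>s\<in>UNIV. quad G (w s)) > 0"
  proof (rule ccontr)
    assume "\<not> (\<Sum>s\<in>UNIV. quad G (w s)) > 0"
    then have "(\<Sum>s\<in>UNIV. quad G (w s)) = 0" using psd by (meson not_less order.antisym sum_nonneg)
    then have "\<forall>s\<in>UNIV. quad G (w s) = 0" using psd by (subst sum_nonneg_eq_0_iff[symmetric]) auto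
    then have w0: "w s = (\<lambda>_. 0)" for s using pd[of "w s"] by auto
    have "\<xi> i = (\<lambda>_. 0)" for i
    proof -
      have "quad G (\<xi> i) = (\<Sum>s\<in>UNIV. w s i * w s i)"
        unfolding quad_def bil[OF L'] w_def by simp
      also have "\<dots> = 0" using w0 by (simp add: fun_eq_iff)
      finally show ?thesis using pd by (metis less_irrefl)
    qed
    then show False using nz by (auto simp: fun_eq_iff)
  qed
  then show ?thesis using T by simp
qed

definition F4 :: "('a::finite \<Rightarrow> 'a \<Rightarrow> 'a \<Rightarrow> 'a \<Rightarrow> real) \<Rightarrow> ('a \<Rightarrow> 'a \<Rightarrow> real) \<Rightarrow> ('a \<Rightarrow> 'a \<Rightarrow> real) \<Rightarrow> real" where
  "F4 T \<xi> \<eta> = (\<Sum>j\<in>UNIV. \<Sum>l\<in>UNIV. \<Sum>a\<in>UNIV. \<Sum>b\<in>UNIV. T j a l b * \<xi> a b * \<eta> j l)"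

definition S2 :: "'a \<Rightarrow> 'a \<Rightarrow> 'a \<Rightarrow> 'a \<Rightarrow> real" where
  "S2 p q a b = ind p a * ind q b + ind q a * ind p b"

lemma ind2:
  fixes f :: "'a::finite \<Rightarrow> 'a \<Rightarrow> real"
  shows "(\<Sum>a\<in>UNIV. \<Sum>b\<in>UNIV. f a b * S2 p q a b) = f p q + f q p"
proof -
  have e: "f a b * S2 p q a b = ind p a * (f a b * ind q b) + ind q a * (f a b * ind p b)" for a b
    by (simp add: S2_def algebra_simps)
  show ?thesis unfolding e
    by (simp only: sum.distrib sum_distrib_left[symmetric] sum_ind_r sum_ind_l)
qed

lemma F4_add:
  "F4 T (\<lambda>a b. \<xi> a b + \<eta> a b) (\<lambda>a b. \<xi> a b + \<eta> a b) = F4 T \<xi> \<xi> + F4 T \<xi> \<eta> + F4 T \<eta> \<xi> + F4 T \<eta> \<eta>"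
proof -
  have e: "T j a l b * (\<xi> a b + \<eta> a b) * (\<xi> j l + \<eta> j l) =
    T j a l b * \<xi> a b * \<xi> j l + T j a l b * \<xi> a b * \<eta> j l + T j a l b * \<eta> a b * \<xi> j l + T j a l b * \<eta> a b * \<eta> j l"
    for j a l b by (simp add: algebra_simps)
  show ?thesis unfolding F4_def e by (simp only: sum.distrib)
qed

lemma sum4_pairswap:
  "(\<Sum>j\<in>A. \<Sum>l\<in>B. \<Sum>a\<in>C. \<Sum>b\<in>D. f j l a b) = (\<Sum>a\<in>C. \<Sum>b\<in>D. \<Sum>j\<in>A. \<Sum>l\<in>B. f j l a b)"
proof -
  have "(\<Sum>j\<in>A. \<Sum>l\<in>B. \<Sum>a\<in>C. \<Sum>b\<in>D. f j l a b) = (\<Sum>j\<in>A. \<Sum>a\<in>C. \<Sum>b\<in>D. \<Sum>l\<in>B. f j l a b)"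
    by (rule sum.cong[OF refl], rule swap3[symmetric])
  also have "\<dots> = (\<Sum>a\<in>C. \<Sum>b\<in>D. \<Sum>j\<in>A. \<Sum>l\<in>B. f j l a b)"
    by (rule swap3[symmetric])
  finally show ?thesis .
qed

lemma F4_symm:
  assumes s3: "\<And>j a l b. T j a l b = T a j b l"
  shows "F4 T \<eta> \<xi> = F4 T \<xi> \<eta>"
proof -
  have "F4 T \<eta> \<xi> = (\<Sum>j\<in>UNIV. \<Sum>l\<in>UNIV. \<Sum>a\<in>UNIV. \<Sum>b\<in>UNIV. T a j b l * \<eta> j l * \<xi> a b)"
    unfolding F4_def by (subst sum4_pairswap) (simp add: mult_ac)
  also have "\<dots> = F4 T \<xi> \<eta>" unfolding F4_def using s3 by (simp add: mult_ac)
  finally show ?thesis .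
qed

lemma F4_S2:
  assumes s1: "\<And>j a l b. T j a l b = T l a j b" and s2: "\<And>j a l b. T j a l b = T j b l a"
  shows "F4 T (S2 p q) (S2 r s) = 4 * T r p s q"
proof -
  have "F4 T (S2 p q) (S2 r s) = (\<Sum>j\<in>UNIV. \<Sum>l\<in>UNIV. (\<Sum>a\<in>UNIV. \<Sum>b\<in>UNIV. T j a l b * S2 p q a b) * S2 r s j l)"
    unfolding F4_def by (simp add: sum_distrib_right)
  also have "\<dots> = (\<Sum>j\<in>UNIV. \<Sum>l\<in>UNIV. (T j p l q + T j q l p) * S2 r s j l)"
    by (simp only: ind2)
  also have "\<dots> = (T r p s q + T r q s p) + (T s p r q + T s q r p)"
    by (rule ind2)
  also have "\<dots> = 4 * T r p s q" using s1[of r p s q] s2[of r p s q] s1[of r q s p] by simp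
  finally show ?thesis .
qed

lemma polar:
  assumes s1: "\<And>j a l b. T j a l b = T l a j b" and s2: "\<And>j a l b. T j a l b = T j b l a"
    and s3: "\<And>j a l b. T j a l b = T a j b l"
    and Z: "\<And>\<xi>. (\<forall>i k. \<xi> i k = \<xi> k i) \<Longrightarrow> F4 T \<xi> \<xi> = 0"
  shows "T r p s q = 0"
proof -
  have sy: "\<forall>i k. S2 p q i k = S2 p q k i" "\<forall>i k. S2 r s i k = S2 r s k i"
    "\<forall>i k. S2 p q i k + S2 r s i k = S2 p q k i + S2 r s k i"
    by (auto simp: S2_def)
  have "0 = F4 T (\<lambda>a b. S2 p q a b + S2 r s a b) (\<lambda>a b. S2 p q a b + S2 r s a b)"
    using Z[OF sy(3)] by simp
  also have "\<dots> = 2 * F4 T (S2 p q) (S2 r s)"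
    unfolding F4_add F4_symm[OF s3, where \<eta>="S2 r s" and \<xi>="S2 p q"] using Z[OF sy(1)] Z[OF sy(2)]
    by simp
  finally show ?thesis unfolding F4_S2[OF s1 s2] by simp
qed

definition inner4 :: "('a::finite \<Rightarrow> 'a \<Rightarrow> real) \<Rightarrow> ('a \<Rightarrow> 'a \<Rightarrow> real) \<Rightarrow> ('a \<Rightarrow> 'a \<Rightarrow> real) \<Rightarrow> real" where
  "inner4 G \<xi> \<eta> = (\<Sum>i\<in>UNIV. \<Sum>j\<in>UNIV. \<Sum>k\<in>UNIV. \<Sum>l\<in>UNIV. G i j * G k l * \<xi> i k * \<eta> j l)"

definition hq :: "('a::finite \<Rightarrow> 'a \<Rightarrow> real) \<Rightarrow> ('a \<Rightarrow> 'a \<Rightarrow> 'a \<Rightarrow> 'a \<Rightarrow> real) \<Rightarrow> ('a \<Rightarrow> 'a \<Rightarrow> real) \<Rightarrow> 'a \<Rightarrow> 'a \<Rightarrow> real" where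
  "hq M Qu \<xi> i k = (\<Sum>j\<in>UNIV. \<Sum>l\<in>UNIV. (\<Sum>m\<in>UNIV. M k m * Qu i j m l) * \<xi> j l)"

definition ql :: "('a::finite \<Rightarrow> 'a \<Rightarrow> real) \<Rightarrow> ('a \<Rightarrow> 'a \<Rightarrow> 'a \<Rightarrow> 'a \<Rightarrow> real) \<Rightarrow> 'a \<Rightarrow> 'a \<Rightarrow> 'a \<Rightarrow> 'a \<Rightarrow> real" where
  "ql G Qu j a l b = (\<Sum>m\<in>UNIV. G j m * Qu m a l b)"

lemma rot4: "(\<Sum>k\<in>K. \<Sum>a\<in>A. \<Sum>b\<in>B. \<Sum>m\<in>C. f k a b m) = (\<Sum>a\<in>A. \<Sum>b\<in>B. \<Sum>m\<in>C. \<Sum>k\<in>K. f k a b m)"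
proof -
  have "(\<Sum>a\<in>A. \<Sum>b\<in>B. \<Sum>m\<in>C. \<Sum>k\<in>K. f k a b m) = (\<Sum>a\<in>A. \<Sum>b\<in>B. \<Sum>k\<in>K. \<Sum>m\<in>C. f k a b m)"
    by (intro sum.cong refl sum.swap)
  also have "\<dots> = (\<Sum>k\<in>K. \<Sum>a\<in>A. \<Sum>b\<in>B. \<Sum>m\<in>C. f k a b m)" by (rule swap3)
  finally show ?thesis by simp
qed

lemma stepA:
  fixes G M :: "'a::finite \<Rightarrow> 'a \<Rightarrow> real"
  assumes GM: "\<And>l m. (\<Sum>k\<in>UNIV. G k l * M k m) = ind l m"
  shows "(\<Sum>k\<in>UNIV. G k l * hq M Qu \<xi> i k) = (\<Sum>a\<in>UNIV. \<Sum>b\<in>UNIV. Qu i a l b * \<xi> a b)"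
proof -
  have "(\<Sum>k\<in>UNIV. G k l * hq M Qu \<xi> i k) = (\<Sum>k\<in>UNIV. \<Sum>a\<in>UNIV. \<Sum>b\<in>UNIV. \<Sum>m\<in>UNIV. G k l * M k m * (Qu i a m b * \<xi> a b))"
    unfolding hq_def by (simp add: sum_distrib_left sum_distrib_right mult_ac)
  also have "\<dots> = (\<Sum>a\<in>UNIV. \<Sum>b\<in>UNIV. \<Sum>m\<in>UNIV. \<Sum>k\<in>UNIV. G k l * M k m * (Qu i a m b * \<xi> a b))"
    by (rule rot4)
  also have "\<dots> = (\<Sum>a\<in>UNIV. \<Sum>b\<in>UNIV. \<Sum>m\<in>UNIV. ind l m * (Qu i a m b * \<xi> a b))"
    by (simp only: sum_distrib_right[symmetric] GM)
  also have "\<dots> = (\<Sum>a\<in>UNIV. \<Sum>b\<in>UNIV. Qu i a l b * \<xi> a b)"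
    by (simp only: sum_ind_l)
  finally show ?thesis .
qed

lemma N_formula:
  fixes G M :: "'a::finite \<Rightarrow> 'a \<Rightarrow> real"
  assumes GM: "\<And>l m. (\<Sum>k\<in>UNIV. G k l * M k m) = ind l m"
    and sym: "\<And>i j. G i j = G j i"
  shows "inner4 G (hq M Qu \<xi>) \<xi> = F4 (ql G Qu) \<xi> \<xi>"
proof -
  define P where "P i l = (\<Sum>a\<in>UNIV. \<Sum>b\<in>UNIV. Qu i a l b * \<xi> a b)" for i l
  have "inner4 G (hq M Qu \<xi>) \<xi> = (\<Sum>i\<in>UNIV. \<Sum>j\<in>UNIV. \<Sum>l\<in>UNIV. \<Sum>k\<in>UNIV. G i j * G k l * hq M Qu \<xi> i k * \<xi> j l)"
    unfolding inner4_def by (intro sum.cong refl sum.swap)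
  also have "\<dots> = (\<Sum>i\<in>UNIV. \<Sum>j\<in>UNIV. \<Sum>l\<in>UNIV. G i j * \<xi> j l * (\<Sum>k\<in>UNIV. G k l * hq M Qu \<xi> i k))"
    by (simp add: sum_distrib_left mult_ac)
  also have "\<dots> = (\<Sum>i\<in>UNIV. \<Sum>j\<in>UNIV. \<Sum>l\<in>UNIV. G i j * \<xi> j l * P i l)"
    unfolding stepA[OF GM] P_def ..
  also have "\<dots> = (\<Sum>j\<in>UNIV. \<Sum>l\<in>UNIV. \<Sum>i\<in>UNIV. G i j * \<xi> j l * P i l)"
    by (rule swap3[symmetric])
  also have "\<dots> = (\<Sum>j\<in>UNIV. \<Sum>l\<in>UNIV. \<xi> j l * (\<Sum>i\<in>UNIV. G j i * P i l))"
    using sym by (simp add: sum_distrib_left mult_ac)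
  also have "\<dots> = (\<Sum>j\<in>UNIV. \<Sum>l\<in>UNIV. \<xi> j l * (\<Sum>i\<in>UNIV. \<Sum>a\<in>UNIV. \<Sum>b\<in>UNIV. G j i * Qu i a l b * \<xi> a b))"
    unfolding P_def by (simp add: sum_distrib_left mult_ac)
  also have "\<dots> = (\<Sum>j\<in>UNIV. \<Sum>l\<in>UNIV. \<xi> j l * (\<Sum>a\<in>UNIV. \<Sum>b\<in>UNIV. \<Sum>i\<in>UNIV. G j i * Qu i a l b * \<xi> a b))"
    by (intro sum.cong refl arg_cong2[where f="(*)"] swap3[symmetric])
  also have "\<dots> = F4 (ql G Qu) \<xi> \<xi>"
    unfolding F4_def ql_def by (simp add: sum_distrib_left sum_distrib_right mult_ac)
  finally show ?thesis .
qed

lemma D_formula: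
  fixes G :: "'a::finite \<Rightarrow> 'a \<Rightarrow> real"
  assumes sym: "\<And>i j. G i j = G j i" and xs: "\<And>i k. \<xi> i k = \<xi> k i"
  shows "F4 (\<lambda>j a l b. c / 2 * (G j a * G l b + G j b * G a l)) \<xi> \<xi> = c * inner4 G \<xi> \<xi>"
proof -
  define X1 where "X1 = (\<Sum>j\<in>UNIV. \<Sum>l\<in>UNIV. \<Sum>a\<in>UNIV. \<Sum>b\<in>UNIV. G j a * G l b * \<xi> a b * \<xi> j l)"
  define X2 where "X2 = (\<Sum>j\<in>UNIV. \<Sum>l\<in>UNIV. \<Sum>a\<in>UNIV. \<Sum>b\<in>UNIV. G j b * G a l * \<xi> a b * \<xi> j l)"
  have F: "F4 (\<lambda>j a l b. c / 2 * (G j a * G l b + G j b * G a l)) \<xi> \<xi> = c / 2 * (X1 + X2)"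
    unfolding F4_def X1_def X2_def by (simp add: sum_distrib_left algebra_simps sum.distrib)
  have "inner4 G \<xi> \<xi> = (\<Sum>a\<in>UNIV. \<Sum>b\<in>UNIV. \<Sum>j\<in>UNIV. \<Sum>l\<in>UNIV. G a j * G b l * \<xi> a b * \<xi> j l)"
    unfolding inner4_def by (intro sum.cong refl sum.swap)
  also have "\<dots> = X1" unfolding X1_def by (subst sum4_pairswap) (simp add: sym)
  finally have I1: "inner4 G \<xi> \<xi> = X1" .
  have "X2 = (\<Sum>j\<in>UNIV. \<Sum>l\<in>UNIV. \<Sum>a\<in>UNIV. \<Sum>b\<in>UNIV. G j b * G l a * \<xi> b a * \<xi> j l)"
    unfolding X2_def using sym xs by simp
  also have "\<dots> = X1" unfolding X1_def by (intro sum.cong refl sum.swap)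
  finally have "X2 = X1" .
  then show ?thesis using F I1 by simp
qed

lemma sm_ld: "smooth_on U h \<Longrightarrow> z \<in> U \<Longrightarrow> ldiff (pdl is h) z i"
  unfolding smooth_on_def ldiff_def by blast

lemma sm_cont: "smooth_on U h \<Longrightarrow> continuous_on U (pdl is h)"
  unfolding smooth_on_def by blast

lemma clair_pdl:
  assumes "open U" "smooth_on U h" "y \<in> U"
  shows "pdl (a # b # is) h y = pdl (b # a # is) h y"
proof -
  have "pd a (pd b (pdl is h)) y = pd b (pd a (pdl is h)) y"
  proof (rule clairaut[OF assms(1,3)])
    show "\<And>z i. z \<in> U \<Longrightarrow> ldiff (pdl is h) z i" using sm_ld[OF assms(2)] by blast
    show "\<And>z i j. z \<in> U \<Longrightarrow> ldiff (pd i (pdl is h)) z j" using sm_ld[OF assms(2), of _ "_ # is"] by simp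
    show "\<And>i j. continuous_on U (pd j (pd i (pdl is h)))" using sm_cont[OF assms(2), of "_ # _ # is"] by simp
  qed
  then show ?thesis by simp
qed

lemma cons_local:
  assumes "open U" "y \<in> U" "\<And>z. z \<in> U \<Longrightarrow> pdl xs h z = pdl ys h z"
  shows "pdl (c # xs) h y = pdl (c # ys) h y"
  using pd_local(1)[OF assms(1,2), of "pdl xs h" "pdl ys h" c] assms(3) by simp

locale hsetup =
  fixes U :: "(real^'q::finite) set" and h :: "real^'q \<Rightarrow> real"
  assumes opn: "open U" and hp: "hessian_potential U h"
begin

lemma sm: "smooth_on U h" using hp unfolding hessian_potential_def by blast

lemma g_sym: "z \<in> U \<Longrightarrow> pdl [a, b] h z = pdl [b, a] h z"
  using clair_pdl[OF opn sm, of z a b "[]"] by simp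

lemma h3_12: "z \<in> U \<Longrightarrow> pdl [a, b, c] h z = pdl [b, a, c] h z"
  using clair_pdl[OF opn sm, of z a b "[c]"] by simp

lemma h3_23: "z \<in> U \<Longrightarrow> pdl [a, b, c] h z = pdl [a, c, b] h z"
  using cons_local[OF opn, of z "[b, c]" h "[c, b]" a] g_sym by simp

lemma h4_12: "z \<in> U \<Longrightarrow> pdl [a, b, c, d] h z = pdl [b, a, c, d] h z"
  using clair_pdl[OF opn sm, of z a b "[c, d]"] by simp

lemma h4_23: "z \<in> U \<Longrightarrow> pdl [a, b, c, d] h z = pdl [a, c, b, d] h z"
  using cons_local[OF opn, of z "[b, c, d]" h "[c, b, d]" a] h3_12 by simp

lemma h4_34: "z \<in> U \<Longrightarrow> pdl [a, b, c, d] h z = pdl [a, b, d, c] h z"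
  using cons_local[OF opn, of z "[b, c, d]" h "[b, d, c]" a] h3_23 by simp

lemma hm_pdl: "hess_metric h z a b = pdl [a, b] h z"
  by (simp add: hess_metric_def)

lemma hm_fun: "(\<lambda>z. hess_metric h z a b) = pdl [a, b] h"
  by (simp add: hess_metric_def fun_eq_iff)

definition GG :: "real^'q \<Rightarrow> real^'q^'q" where "GG z = (\<chi> a b. hess_metric h z a b)"

lemma GG_inv: assumes "z \<in> U" shows "invertible (GG z)"
proof -
  have "\<forall>x. GG z *v x = 0 \<longrightarrow> x = 0"
  proof (intro allI impI)
    fix x assume x: "GG z *v x = 0"
    have "(\<Sum>i\<in>UNIV. \<Sum>j\<in>UNIV. hess_metric h z i j * x $ i * x $ j) = (\<Sum>i\<in>UNIV. x $ i * (GG z *v x) $ i)"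
    proof -
      have e: "(GG z *v x) $ i = (\<Sum>j\<in>UNIV. hess_metric h z i j * x $ j)" for i
        by (simp add: matrix_vector_mult_def GG_def)
      have "(\<Sum>i\<in>UNIV. x $ i * (GG z *v x) $ i) = (\<Sum>i\<in>UNIV. \<Sum>j\<in>UNIV. x $ i * (hess_metric h z i j * x $ j))"
        unfolding e by (simp only: sum_distrib_left)
      also have "\<dots> = (\<Sum>i\<in>UNIV. \<Sum>j\<in>UNIV. hess_metric h z i j * x $ i * x $ j)"
        by (intro sum.cong refl) (simp only: mult_ac)
      finally show ?thesis by simp
    qed
    also have "\<dots> = 0" using x by simp
    finally have "(\<Sum>i\<in>UNIV. \<Sum>j\<in>UNIV. hess_metric h z i j * x $ i * x $ j) = 0" .
    moreover have "x \<noteq> 0 \<Longrightarrow> (\<Sum>i\<in>UNIV. \<Sum>j\<in>UNIV. hess_metric h z i j * x $ i * x $ j) > 0"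
      using hp assms unfolding hessian_potential_def by blast
    ultimately show "x = 0" by force
  qed
  then show ?thesis unfolding invertible_left_inverse matrix_left_invertible_ker .
qed

lemma GG_minv: assumes "z \<in> U"
  shows "GG z ** matrix_inv (GG z) = mat 1" "matrix_inv (GG z) ** GG z = mat 1"
proof -
  have "\<exists>A'. GG z ** A' = mat 1 \<and> A' ** GG z = mat 1" using GG_inv[OF assms] unfolding invertible_def .
  then have "GG z ** matrix_inv (GG z) = mat 1 \<and> matrix_inv (GG z) ** GG z = mat 1"
    unfolding matrix_inv_def by (rule someI_ex)
  then show "GG z ** matrix_inv (GG z) = mat 1" "matrix_inv (GG z) ** GG z = mat 1" by auto
qed

lemma GG_sym: assumes "z \<in> U" shows "transpose (GG z) = GG z"
  unfolding vec_eq_iff GG_def transpose_def using g_sym[OF assms] by (simp add: hm_pdl)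

lemma Minv_sym: assumes "z \<in> U" shows "transpose (matrix_inv (GG z)) = matrix_inv (GG z)"
proof -
  let ?A = "GG z" and ?M = "matrix_inv (GG z)"
  have "transpose (?A ** ?M) = transpose (mat 1 :: real^'q^'q)" using GG_minv(1)[OF assms] by simp
  then have 1: "transpose ?M ** ?A = mat 1" unfolding matrix_transpose_mul GG_sym[OF assms] by simp
  have "transpose ?M = transpose ?M ** (?A ** ?M)" using GG_minv(1)[OF assms] by simp
  also have "\<dots> = (transpose ?M ** ?A) ** ?M" by (rule matrix_mul_assoc)
  also have "\<dots> = ?M" unfolding 1 by simp
  finally show ?thesis .
qed

lemma minv_sym: assumes "z \<in> U" shows "metric_inv h z m n = metric_inv h z n m"
proof -
  have "transpose (matrix_inv (GG z)) $ m $ n = matrix_inv (GG z) $ m $ n" using Minv_sym[OF assms] by simp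
  then show ?thesis unfolding metric_inv_def GG_def[symmetric] transpose_def by simp
qed

lemma GM_entry: assumes "z \<in> U" shows "(\<Sum>k\<in>UNIV. hess_metric h z l k * metric_inv h z k m) = ind l m"
proof -
  have "(GG z ** matrix_inv (GG z)) $ l $ m = (mat 1 :: real^'q^'q) $ l $ m" using GG_minv(1)[OF assms] by simp
  then show ?thesis unfolding metric_inv_def GG_def[symmetric] matrix_matrix_mult_def mat_def ind_def
    by (simp add: GG_def eq_commute)
qed

end

lemma prod_diff:
  fixes f :: "'i \<Rightarrow> real \<Rightarrow> real"
  assumes "finite I" "\<And>i. i \<in> I \<Longrightarrow> f i differentiable (at 0)"
  shows "(\<lambda>t. \<Prod>i\<in>I. f i t) differentiable (at 0)"
  using assms
proof (induction I rule: finite_induct)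
  case empty then show ?case by simp
next
  case (insert a I)
  then show ?case by (simp add: differentiable_mult)
qed

lemma det_diff:
  fixes F :: "real \<Rightarrow> real^'n::finite^'n"
  assumes "\<And>a b. (\<lambda>t. F t $ a $ b) differentiable (at 0)"
  shows "(\<lambda>t. det (F t)) differentiable (at 0)"
  unfolding det_def
proof (rule differentiable_sum)
  show "finite {p. p permutes (UNIV::'n set)}" by (simp add: finite_permutations)
  show "\<forall>p\<in>{p. p permutes UNIV}. (\<lambda>t. of_int (sign p) * (\<Prod>i\<in>UNIV. F t $ i $ p i)) differentiable at 0"
    using assms by (auto intro!: differentiable_mult prod_diff)
qed

context hsetup begin

lemma minv_cramer: assumes "z \<in> U"
  shows "metric_inv h z m n = det (\<chi> a b. if b = m then (if a = n then 1 else 0) else hess_metric h z a b) / det (GG z)"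
proof -
  let ?A = "GG z" and ?M = "matrix_inv (GG z)"
  have d0: "det ?A \<noteq> 0" using GG_inv[OF assms] invertible_det_nz by blast
  have "?A *v (?M *v axis n 1) = axis n 1"
    by (simp add: matrix_vector_mul_assoc GG_minv(1)[OF assms])
  then have "?M *v axis n 1 = (\<chi> k. det(\<chi> i j. if j = k then axis n 1 $ i else ?A $ i $ j) / det ?A)"
    using cramer[OF d0] by blast
  then have "(?M *v axis n 1) $ m = det(\<chi> i j. if j = m then axis n 1 $ i else ?A $ i $ j) / det ?A" by simp
  moreover have "(?M *v axis n 1) $ m = ?M $ m $ n"
    by (simp add: matrix_vector_mult_def axis_def if_distrib cong: if_cong)
  moreover have "(\<chi> i j. if j = m then axis n 1 $ i else ?A $ i $ j) =
      (\<chi> a b. if b = m then (if a = n then 1 else 0) else hess_metric h z a b)"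
    by (simp add: vec_eq_iff axis_def GG_def)
  ultimately show ?thesis unfolding metric_inv_def GG_def[symmetric] by simp
qed

lemma ldiff_minv: assumes "y \<in> U" shows "ldiff (\<lambda>z. metric_inv h z m n) y k"
proof -
  let ?C = "\<lambda>z. det (\<chi> a b. if b = m then (if a = n then 1 else 0) else hess_metric h z a b) / det (GG z)"
  have "ldiff ?C y k"
    unfolding ldiff_def
  proof (rule differentiable_divide)
    show "(\<lambda>t. det (\<chi> a b. if b = m then (if a = n then 1 else 0) else hess_metric h (y + t *\<^sub>R axis k 1) a b)) differentiable at 0"
    proof (rule det_diff)
      fix a b
      show "(\<lambda>t. (\<chi> a b. if b = m then (if a = n then 1 else 0) else hess_metric h (y + t *\<^sub>R axis k 1) a b) $ a $ b) differentiable at 0"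
        using sm_ld[OF sm assms, of "[a, b]" k] by (cases "b = m") (auto simp: ldiff_def hm_pdl)
    qed
    show "(\<lambda>t. det (GG (y + t *\<^sub>R axis k 1))) differentiable at 0"
    proof (rule det_diff)
      fix a b
      show "(\<lambda>t. GG (y + t *\<^sub>R axis k 1) $ a $ b) differentiable at 0"
        using sm_ld[OF sm assms, of "[a, b]" k] by (auto simp: ldiff_def hm_pdl GG_def)
    qed
    show "det (GG (y + 0 *\<^sub>R axis k 1)) \<noteq> 0" using GG_inv[OF assms] invertible_det_nz[of "GG y"] by simp
  qed
  then show ?thesis using pd_local(2)[OF opn assms, of "\<lambda>z. metric_inv h z m n" ?C k] minv_cramer by blast
qed

lemma pd_pdl: "pd j (pdl xs h) = pdl (j # xs) h" by simp

definition Gs :: "'q \<Rightarrow> 'q \<Rightarrow> 'q \<Rightarrow> real^'q \<Rightarrow> real" where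
  "Gs m j l z = 1/2 * (\<Sum>n\<in>UNIV. metric_inv h z m n * pdl [n, j, l] h z)"

lemma chr_simp: assumes "z \<in> U" shows "hess_gamma h z m j l = Gs m j l z"
proof -
  have "hess_gamma h z m j l = 1/2 * (\<Sum>n\<in>UNIV. metric_inv h z m n *
      (pdl [j, n, l] h z + pdl [l, n, j] h z - pdl [n, j, l] h z))"
    unfolding hess_gamma_def christoffel_def hm_fun pd_pdl by simp
  also have "\<dots> = Gs m j l z" unfolding Gs_def
    using h3_12[OF assms, of j n l for n] h3_12[OF assms, of l n j for n] h3_23[OF assms, of n l j for n]
    by simp
  finally show ?thesis .
qed

lemma ldiff_Gs: assumes "y \<in> U" shows "ldiff (Gs m j l) y k"
proof -
  have "ldiff (\<lambda>z. \<Sum>n\<in>UNIV. metric_inv h z m n * pdl [n, j, l] h z) y k"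
    by (rule pd_sum(2)) (auto simp del: pdl.simps intro!: pd_mult(2) ldiff_minv[OF assms] sm_ld[OF sm assms])
  then have "ldiff (\<lambda>z. 1/2 * (\<Sum>n\<in>UNIV. metric_inv h z m n * pdl [n, j, l] h z)) y k"
    by (rule pd_cmult(2))
  then show ?thesis unfolding Gs_def[abs_def] .
qed

lemma hessQ_eq: assumes "y \<in> U" shows "hessQ h y m j k l = pd k (Gs m j l) y"
  unfolding hessQ_def using pd_local(1)[OF opn assms, of "\<lambda>z. hess_gamma h z m j l" "Gs m j l" k] chr_simp
  by blast

lemma key_id: assumes "z \<in> U"
  shows "(\<Sum>m\<in>UNIV. hess_metric h z i m * Gs m j l z) = 1/2 * pdl [i, j, l] h z"
proof -
  have "(\<Sum>m\<in>UNIV. hess_metric h z i m * Gs m j l z) =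
     1/2 * (\<Sum>m\<in>UNIV. \<Sum>n\<in>UNIV. hess_metric h z i m * metric_inv h z m n * pdl [n, j, l] h z)"
    unfolding Gs_def by (simp add: sum_distrib_left mult_ac)
  also have "\<dots> = 1/2 * (\<Sum>n\<in>UNIV. \<Sum>m\<in>UNIV. hess_metric h z i m * metric_inv h z m n * pdl [n, j, l] h z)"
    by (subst sum.swap) (rule refl)
  also have "\<dots> = 1/2 * (\<Sum>n\<in>UNIV. ind i n * pdl [n, j, l] h z)"
    by (simp only: sum_distrib_right[symmetric] GM_entry[OF assms])
  also have "\<dots> = 1/2 * pdl [i, j, l] h z" by (simp only: sum_ind_l)
  finally show ?thesis .
qed

lemma Qlow_formula: assumes "y \<in> U"
  shows "hessQ_low h y i j k l = 1/2 * pdl [k, i, j, l] h y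
     - 1/2 * (\<Sum>m\<in>UNIV. \<Sum>n\<in>UNIV. pdl [k, i, m] h y * metric_inv h y m n * pdl [n, j, l] h y)"
proof -
  let ?F = "\<lambda>z. \<Sum>m\<in>UNIV. hess_metric h z i m * Gs m j l z"
  have ldg: "ldiff (\<lambda>z. hess_metric h z i m) y k" for m
    unfolding hm_fun by (rule sm_ld[OF sm assms])
  have "pd k ?F y = pd k (\<lambda>z. 1/2 * pdl [i, j, l] h z) y"
    using pd_local(1)[OF opn assms, of ?F "\<lambda>z. 1/2 * pdl [i, j, l] h z" k] key_id by blast
  also have "\<dots> = 1/2 * pdl [k, i, j, l] h y"
    using pd_cmult(1)[OF sm_ld[OF sm assms, of "[i, j, l]" k], of "1/2"] by simp
  finally have A: "pd k ?F y = 1/2 * pdl [k, i, j, l] h y" .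
  have "pd k ?F y = (\<Sum>m\<in>UNIV. pd k (\<lambda>z. hess_metric h z i m * Gs m j l z) y)"
    by (rule pd_sum(1)) (auto intro!: pd_mult(2) ldg ldiff_Gs[OF assms])
  also have "\<dots> = (\<Sum>m\<in>UNIV. pdl [k, i, m] h y * Gs m j l y + hess_metric h y i m * pd k (Gs m j l) y)"
    by (intro sum.cong refl, subst pd_mult(1)[OF ldg ldiff_Gs[OF assms]]) (simp add: hm_fun)
  also have "\<dots> = (\<Sum>m\<in>UNIV. pdl [k, i, m] h y * Gs m j l y) + hessQ_low h y i j k l"
    unfolding hessQ_low_def hessQ_eq[OF assms] by (simp add: sum.distrib)
  finally have B: "pd k ?F y = (\<Sum>m\<in>UNIV. pdl [k, i, m] h y * Gs m j l y) + hessQ_low h y i j k l" .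
  have C: "(\<Sum>m\<in>UNIV. pdl [k, i, m] h y * Gs m j l y) =
     1/2 * (\<Sum>m\<in>UNIV. \<Sum>n\<in>UNIV. pdl [k, i, m] h y * metric_inv h y m n * pdl [n, j, l] h y)"
    unfolding Gs_def by (simp add: sum_distrib_left mult_ac)
  show ?thesis using A B C by simp
qed

lemma hm_sym: "z \<in> U \<Longrightarrow> hess_metric h z a b = hess_metric h z b a"
  unfolding hm_pdl by (rule g_sym)

lemma h3_13: assumes "z \<in> U" shows "pdl [a, b, c] h z = pdl [c, b, a] h z"
proof -
  have "pdl [a, b, c] h z = pdl [b, a, c] h z" by (rule h3_12[OF assms])
  also have "\<dots> = pdl [b, c, a] h z" by (rule h3_23[OF assms])
  also have "\<dots> = pdl [c, b, a] h z" by (rule h3_12[OF assms])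
  finally show ?thesis .
qed

lemma h4_rev: assumes "z \<in> U" shows "pdl [l, j, i, k] h z = pdl [k, i, j, l] h z"
proof -
  have "pdl [l, j, i, k] h z = pdl [l, i, j, k] h z" by (rule h4_23[OF assms])
  also have "\<dots> = pdl [i, l, j, k] h z" by (rule h4_12[OF assms])
  also have "\<dots> = pdl [i, j, l, k] h z" by (rule h4_23[OF assms])
  also have "\<dots> = pdl [i, j, k, l] h z" by (rule h4_34[OF assms])
  also have "\<dots> = pdl [i, k, j, l] h z" by (rule h4_23[OF assms])
  also have "\<dots> = pdl [k, i, j, l] h z" by (rule h4_12[OF assms])
  finally show ?thesis .
qed

lemma Qs1: assumes "y \<in> U" shows "hessQ_low h y i j k l = hessQ_low h y k j i l"
  unfolding Qlow_formula[OF assms] using h4_12[OF assms, of k i j l] h3_12[OF assms, of k i]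
  by simp

lemma Qs2: assumes "y \<in> U" shows "hessQ_low h y i j k l = hessQ_low h y i l k j"
  unfolding Qlow_formula[OF assms] using h4_34[OF assms, of k i j l] h3_23[OF assms, of _ j l]
  by simp

lemma Qs3: assumes "y \<in> U" shows "hessQ_low h y i j k l = hessQ_low h y j i l k"
proof -
  have "(\<Sum>m\<in>UNIV. \<Sum>n\<in>UNIV. pdl [l, j, m] h y * metric_inv h y m n * pdl [n, i, k] h y)
      = (\<Sum>n\<in>UNIV. \<Sum>m\<in>UNIV. pdl [l, j, m] h y * metric_inv h y m n * pdl [n, i, k] h y)"
    by (rule sum.swap)
  also have "\<dots> = (\<Sum>m\<in>UNIV. \<Sum>n\<in>UNIV. pdl [k, i, m] h y * metric_inv h y m n * pdl [n, j, l] h y)"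
    using h3_13[OF assms, of l j] h3_13[OF assms, of _ i k] minv_sym[OF assms]
    by (intro sum.cong refl) (simp add: mult_ac)
  finally show ?thesis unfolding Qlow_formula[OF assms] h4_rev[OF assms, of l j i k] by simp
qed

end

lemma F4_diff: "F4 (\<lambda>j a l b. A j a l b - B j a l b) \<xi> \<eta> = F4 A \<xi> \<eta> - F4 B \<xi> \<eta>"
proof -
  have e: "(A j a l b - B j a l b) * \<xi> a b * \<eta> j l = A j a l b * \<xi> a b * \<eta> j l - B j a l b * \<xi> a b * \<eta> j l"
    for j a l b by (simp add: algebra_simps)
  show ?thesis unfolding F4_def e by (simp only: sum_subtractf)
qed

lemma F4_zero: "F4 T (\<lambda>_ _. 0) (\<lambda>_ _. 0) = 0" by (simp add: F4_def)

theorem proposition10: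
  fixes U :: "(real^'q::finite) set" and h :: "real^'q \<Rightarrow> real" and c :: real
  assumes "open U" and "hessian_potential U h"
  shows "(\<forall>y\<in>U. \<forall>\<xi>. sym2 \<xi> \<and> \<xi> \<noteq> (\<lambda>_ _. 0) \<longrightarrow> hess_sectional h y \<xi> = c)
     \<longleftrightarrow> (\<forall>y\<in>U. \<forall>i j k l. hessQ_low h y i j k l =
            c / 2 * (hess_metric h y i j * hess_metric h y k l
                     + hess_metric h y i l * hess_metric h y j k))"
proof -
  interpret hsetup U h by unfold_locales (rule assms)+
  define C where "C y = (\<lambda>j a l b. c / 2 * (hess_metric h y j a * hess_metric h y l b + hess_metric h y j b * hess_metric h y a l))" for y
  have TI: "tens_inner h y = inner4 (\<lambda>i j. hess_metric h y i j)" for y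
    by (simp add: tens_inner_def inner4_def fun_eq_iff)
  have HQ: "hatQ h y \<xi> = hq (metric_inv h y) (hessQ h y) \<xi>" for y \<xi>
    by (simp add: hatQ_def hessQ_mixed_def hq_def fun_eq_iff)
  have QL: "hessQ_low h y = ql (\<lambda>i j. hess_metric h y i j) (hessQ h y)" for y
    by (simp add: hessQ_low_def ql_def fun_eq_iff)
  have GM: "(\<Sum>k\<in>UNIV. hess_metric h y k l * metric_inv h y k m) = ind l m" if "y \<in> U" for y l m
    using GM_entry[OF that, of l m] hm_sym[OF that] by simp
  have pdq: "quad (\<lambda>i j. hess_metric h y i j) x > 0" if "y \<in> U" "x \<noteq> (\<lambda>_. 0)" for y x
  proof -
    have v: "(\<chi> i. x i) \<noteq> 0" using that(2) by (auto simp: vec_eq_iff fun_eq_iff)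
    have "0 < (\<Sum>i\<in>UNIV. \<Sum>j\<in>UNIV. hess_metric h y i j * (\<chi> i. x i) $ i * (\<chi> i. x i) $ j)"
      using assms(2) that(1) v unfolding hessian_potential_def by blast
    then show ?thesis unfolding quad_def by simp
  qed
  have Dpos: "inner4 (\<lambda>i j. hess_metric h y i j) \<xi> \<xi> > 0" if "y \<in> U" "\<xi> \<noteq> (\<lambda>_ _. 0)" for y \<xi>
    unfolding inner4_def by (rule tens_pos) (use hm_sym[OF that(1)] pdq[OF that(1)] that(2) in auto)
  have sect: "hess_sectional h y \<xi> = F4 (hessQ_low h y) \<xi> \<xi> / inner4 (\<lambda>i j. hess_metric h y i j) \<xi> \<xi>"
    if "y \<in> U" for y \<xi>
    unfolding hess_sectional_def TI HQ QL using N_formula[OF GM[OF that] hm_sym[OF that]] by simp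
  have Dform: "F4 (C y) \<xi> \<xi> = c * inner4 (\<lambda>i j. hess_metric h y i j) \<xi> \<xi>" if "y \<in> U" "sym2 \<xi>" for y \<xi>
    unfolding C_def by (rule D_formula) (use hm_sym[OF that(1)] that(2) in \<open>auto simp: sym2_def\<close>)
  show ?thesis
  proof
    assume L: "\<forall>y\<in>U. \<forall>\<xi>. sym2 \<xi> \<and> \<xi> \<noteq> (\<lambda>_ _. 0) \<longrightarrow> hess_sectional h y \<xi> = c"
    show "\<forall>y\<in>U. \<forall>i j k l. hessQ_low h y i j k l =
            c / 2 * (hess_metric h y i j * hess_metric h y k l + hess_metric h y i l * hess_metric h y j k)"
    proof (intro ballI allI)
      fix y i j k l assume y: "y \<in> U"
      define T where "T = (\<lambda>j a l b. hessQ_low h y j a l b - C y j a l b)"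
      have Z: "F4 T \<xi> \<xi> = 0" if xs: "\<forall>i k. \<xi> i k = \<xi> k i" for \<xi>
      proof (cases "\<xi> = (\<lambda>_ _. 0)")
        case True then show ?thesis by (simp add: F4_zero)
      next
        case False
        have s2: "sym2 \<xi>" using xs by (simp add: sym2_def)
        have "hess_sectional h y \<xi> = c" using L y s2 False by blast
        then have "F4 (hessQ_low h y) \<xi> \<xi> = c * inner4 (\<lambda>i j. hess_metric h y i j) \<xi> \<xi>"
          using sect[OF y] Dpos[OF y False] by (simp add: field_simps)
        then show ?thesis unfolding T_def F4_diff Dform[OF y s2] by simp
      qed
      have "T i j k l = 0"
      proof (rule polar[where T=T])
        show "\<And>j a l b. T j a l b = T l a j b" unfolding T_def C_def
          using Qs1[OF y] hm_sym[OF y] by (simp add: algebra_simps)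
        show "\<And>j a l b. T j a l b = T j b l a" unfolding T_def C_def
          using Qs2[OF y] hm_sym[OF y] by (simp add: algebra_simps)
        show "\<And>j a l b. T j a l b = T a j b l" unfolding T_def C_def
          using Qs3[OF y] hm_sym[OF y] by (simp add: algebra_simps)
        show "\<And>\<xi>. \<forall>i k. \<xi> i k = \<xi> k i \<Longrightarrow> F4 T \<xi> \<xi> = 0" by (rule Z)
      qed
      then show "hessQ_low h y i j k l =
            c / 2 * (hess_metric h y i j * hess_metric h y k l + hess_metric h y i l * hess_metric h y j k)"
        unfolding T_def C_def by simp
    qed
  next
    assume R: "\<forall>y\<in>U. \<forall>i j k l. hessQ_low h y i j k l =
            c / 2 * (hess_metric h y i j * hess_metric h y k l + hess_metric h y i l * hess_metric h y j k)"
    show "\<forall>y\<in>U. \<forall>\<xi>. sym2 \<xi> \<and> \<xi> \<noteq> (\<lambda>_ _. 0) \<longrightarrow> hess_sectional h y \<xi> = c"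
    proof (intro ballI allI impI)
      fix y and \<xi> :: "'q \<Rightarrow> 'q \<Rightarrow> real" assume y: "y \<in> U" and xi: "sym2 \<xi> \<and> \<xi> \<noteq> (\<lambda>_ _. 0)"
      have "hessQ_low h y = C y" using R y by (simp add: C_def fun_eq_iff)
      then have "F4 (hessQ_low h y) \<xi> \<xi> = c * inner4 (\<lambda>i j. hess_metric h y i j) \<xi> \<xi>"
        using Dform[OF y] xi by simp
      moreover have "inner4 (\<lambda>i j. hess_metric h y i j) \<xi> \<xi> > 0" using Dpos[OF y] xi by blast
      ultimately show "hess_sectional h y \<xi> = c" using sect[OF y, of \<xi>] by simp
    qed
  qed
qed

end
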